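(* Let $n$ be a positive integer and $s\ge 64n$. There exists a subset of $\{0,1\}^s$ of size $2^n$ such that $\sum_{i=1}^s a_i(1-b_i)\ge s/8$ for any two different elements $a=(a_1,\dots,a_s)$ and $b=(b_1,\dots,b_s)$ of the subset. *)

theory Defs
  imports Complex_Main "HOL-Library.FuncSet"
begin

end

theory Submission
  imports Defs
begin

lemma smallsets_bound:
  assumes "d \<le> Suc m" "0 < d"
  shows "card {D \<in> Pow {0..<m}. card D < d} * 3 ^ (m - (d - 1)) \<le> (4::nat) ^ m"
proof -
  have eq: "{D \<in> Pow {0..<m}. card D < d} = (\<Union>i<d. {D \<in> Pow {0..<m}. card D = i})" by auto
  have "card {D \<in> Pow {0..<m}. card D < d} \<le> (\<Sum>i<d. card {D \<in> Pow {0..<m}. card D = i})"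
    unfolding eq by (rule card_UN_le) simp
  also have "\<dots> = (\<Sum>i<d. m choose i)" by (simp add: binomial_def)
  finally have 1: "card {D \<in> Pow {0..<m}. card D < d} * 3 ^ (m - (d - 1)) \<le> (\<Sum>i<d. (m choose i) * 3 ^ (m - (d - 1)))"
    by (metis mult_le_mono1 sum_distrib_right)
  also have "\<dots> \<le> (\<Sum>i<d. (m choose i) * 3 ^ (m - i))"
    by (intro sum_mono mult_le_mono2 power_increasing) auto
  also have "\<dots> \<le> (\<Sum>i\<le>m. (m choose i) * 3 ^ (m - i))"
    by (intro sum_mono2) (use assms in auto)
  also have "\<dots> = (1 + 3) ^ m" using binomial[of 1 3 m] by simp
  finally show ?thesis by simp
qed

lemma gv:
  fixes m d n :: nat
  assumes "0 < d" "d \<le> m" and key: "(2::nat) ^ n * 4 ^ m \<le> 2 ^ m * 3 ^ (m - (d - 1))"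
  shows "M \<le> 2 ^ n \<Longrightarrow> \<exists>C. C \<subseteq> Pow {0..<m} \<and> card C = M \<and>
     (\<forall>A\<in>C. \<forall>B\<in>C. A \<noteq> B \<longrightarrow> d \<le> card ((A - B) \<union> (B - A)))"
proof (induction M)
  case 0
  then show ?case by (intro exI[of _ "{}"]) auto
next
  case (Suc M)
  then obtain C where C: "C \<subseteq> Pow {0..<m}" "card C = M"
     "\<forall>A\<in>C. \<forall>B\<in>C. A \<noteq> B \<longrightarrow> d \<le> card ((A - B) \<union> (B - A))" by auto
  define V where "V = card {D \<in> Pow {0..<m}. card D < d}"
  define ball where "ball A = {B \<in> Pow {0..<m}. card ((A - B) \<union> (B - A)) < d}" for A
  have ballc: "card (ball A) = V" if "A \<in> Pow {0..<m}" for A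
  proof -
    have "bij_betw (\<lambda>B. (A - B) \<union> (B - A)) (ball A) {D \<in> Pow {0..<m}. card D < d}"
    proof (rule bij_betw_byWitness[where f' = "\<lambda>B. (A - B) \<union> (B - A)"])
      show "\<forall>a\<in>ball A. A - (A - a \<union> (a - A)) \<union> (A - a \<union> (a - A) - A) = a" by auto
      show "\<forall>a'\<in>{D \<in> Pow {0..<m}. card D < d}. A - (A - a' \<union> (a' - A)) \<union> (A - a' \<union> (a' - A) - A) = a'" by auto
      show "(\<lambda>B. A - B \<union> (B - A)) ` ball A \<subseteq> {D \<in> Pow {0..<m}. card D < d}"
        using that by (auto simp: ball_def)
      show "(\<lambda>B. A - B \<union> (B - A)) ` {D \<in> Pow {0..<m}. card D < d} \<subseteq> ball A"
      proof
        fix x assume "x \<in> (\<lambda>B. A - B \<union> (B - A)) ` {D \<in> Pow {0..<m}. card D < d}"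
        then obtain D where D: "D \<in> Pow {0..<m}" "card D < d" "x = A - D \<union> (D - A)" by auto
        have "A - x \<union> (x - A) = D" using D by auto
        then show "x \<in> ball A" using D that by (auto simp: ball_def)
      qed
    qed
    then show ?thesis unfolding V_def by (rule bij_betw_same_card)
  qed
  have V1: "V \<ge> 1"
  proof -
    have "{} \<in> {D \<in> Pow {0..<m}. card D < d}" using assms by auto
    then show ?thesis unfolding V_def
      by (metis (no_types, lifting) One_nat_def Suc_leI card_gt_0_iff empty_iff finite_Pow_iff finite_atLeastLessThan finite_subset mem_Collect_eq subsetI)
  qed
  have fC: "finite C" using C(1) finite_subset by (metis finite_Pow_iff finite_atLeastLessThan)
  have "card (\<Union>A\<in>C. ball A) \<le> (\<Sum>A\<in>C. card (ball A))" by (rule card_UN_le[OF fC])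
  also have "\<dots> = (\<Sum>A\<in>C. V)" by (rule sum.cong) (use ballc C in auto)
  also have "\<dots> = M * V" using C by simp
  finally have cb: "card (\<Union>A\<in>C. ball A) \<le> M * V" .
  have "V * 3 ^ (m - (d - 1)) \<le> 4 ^ m" unfolding V_def by (rule smallsets_bound) (use assms in auto)
  hence "2 ^ n * V * 3 ^ (m - (d - 1)) \<le> 2 ^ m * 3 ^ (m - (d - 1))"
  proof -
    have "2 ^ n * V * 3 ^ (m - (d - 1)) = 2 ^ n * (V * 3 ^ (m - (d - 1)))" by (simp add: mult.assoc)
    also have "\<dots> \<le> 2 ^ n * 4 ^ m" using \<open>V * 3 ^ (m - (d - 1)) \<le> 4 ^ m\<close> by (rule mult_le_mono2)
    finally show ?thesis using key by linarith
  qed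
  hence "2 ^ n * V \<le> 2 ^ m" by simp
  moreover have "M * V < 2 ^ n * V" using Suc.prems V1 by (intro mult_less_mono1) auto
  ultimately have "card (\<Union>A\<in>C. ball A) < 2 ^ m" using cb by linarith
  hence "card (\<Union>A\<in>C. ball A) < card (Pow {0..<m::nat})" by (simp add: card_Pow)
  then obtain B where B: "B \<in> Pow {0..<m}" "B \<notin> (\<Union>A\<in>C. ball A)"
  proof -
    have "\<not> Pow {0..<m} \<subseteq> (\<Union>A\<in>C. ball A)"
    proof
      assume a: "Pow {0..<m} \<subseteq> (\<Union>A\<in>C. ball A)"
      have "finite (\<Union>A\<in>C. ball A)" using fC by (auto simp: ball_def)
      from card_mono[OF this a] show False using \<open>card (\<Union>A\<in>C. ball A) < card (Pow {0..<m::nat})\<close> by linarith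
    qed
    then show ?thesis using that by blast
  qed
  have Bfar: "d \<le> card ((A - B) \<union> (B - A))" if "A \<in> C" for A
    using B that C(1) by (auto simp: ball_def)
  have "B \<notin> C" using Bfar assms(1) by fastforce
  show ?case
  proof (intro exI[of _ "insert B C"] conjI)
    show "insert B C \<subseteq> Pow {0..<m}" using B C by auto
    show "card (insert B C) = Suc M" using fC \<open>B \<notin> C\<close> C by simp
    show "\<forall>A\<in>insert B C. \<forall>B'\<in>insert B C. A \<noteq> B' \<longrightarrow> d \<le> card (A - B' \<union> (B' - A))"
      using C(3) Bfar by (auto simp: Un_commute)
  qed
qed

lemma arith_key:
  fixes n s :: nat
  assumes "n > 0" and "s \<ge> 64 * n"
  shows "(2::nat) ^ n * 4 ^ (s div 2) \<le> 2 ^ (s div 2) * 3 ^ (s div 2 - ((s + 7) div 8 - 1))"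
proof -
  define m where "m = s div 2"
  define j where "j = m - ((s + 7) div 8 - 1)"
  define q where "q = j div 2"
  define D where "D = (s + 7) div 8"
  have f1: "2 * m \<le> s" "s \<le> 2 * m + 1" unfolding m_def by auto
  have f2: "8 * D \<le> s + 7" "s < 8 * D + 1" unfolding D_def by auto
  have f3: "2 * q \<le> j" "j \<le> 2 * q + 1" unfolding q_def by auto
  have f4: "j + D = m + 1" unfolding j_def D_def[symmetric] using f1 f2 assms by linarith
  have "3 * q \<ge> n + m" using f1 f2 f3 f4 assms by linarith
  have "(2::nat) ^ n * 4 ^ m = 2 ^ (n + m) * 2 ^ m"
  proof -
    have "(4::nat) ^ m = (2 * 2) ^ m" by simp
    also have "\<dots> = 2 ^ m * 2 ^ m" by (rule power_mult_distrib)
    finally show ?thesis by (simp add: power_add mult_ac)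
  qed
  also have "(2::nat) ^ (n + m) \<le> 2 ^ (3 * q)" using \<open>3 * q \<ge> n + m\<close> by (intro power_increasing) auto
  also have "(2::nat) ^ (3 * q) = 8 ^ q" by (simp add: power_mult)
  also have "(8::nat) ^ q \<le> 9 ^ q" by (rule power_mono) auto
  also have "(9::nat) ^ q = 3 ^ (2 * q)" by (simp add: power_mult)
  also have "(3::nat) ^ (2 * q) \<le> 3 ^ j" by (rule power_increasing) (auto simp: q_def)
  finally show ?thesis unfolding j_def m_def by (simp add: mult.commute)
qed

theorem lemma3:
  fixes n s :: nat
  assumes "n > 0" and "s \<ge> 64 * n"
  shows "\<exists>C. C \<subseteq> ({0..<s} \<rightarrow>\<^sub>E {0::nat, 1}) \<and> card C = 2 ^ n \<and>
           (\<forall>a\<in>C. \<forall>b\<in>C. a \<noteq> b \<longrightarrow>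
              real (\<Sum>i<s. a i * (1 - b i)) \<ge> real s / 8)"
proof -
  define m where "m = s div 2"
  define d where "d = (s + 7) div 8"
  have d0: "0 < d" "d \<le> m"
  proof -
    have "2 * m \<le> s" "s \<le> 2 * m + 1" "8 * d \<le> s + 7" "s < 8 * d + 1" unfolding m_def d_def by auto
    then show "0 < d" "d \<le> m" using assms by linarith+
  qed
  have key: "(2::nat) ^ n * 4 ^ m \<le> 2 ^ m * 3 ^ (m - (d - 1))"
    using arith_key[OF assms] unfolding m_def d_def .
  obtain C where C: "C \<subseteq> Pow {0..<m}" "card C = 2 ^ n"
     "\<forall>A\<in>C. \<forall>B\<in>C. A \<noteq> B \<longrightarrow> d \<le> card ((A - B) \<union> (B - A))"
    using gv[OF d0 key, of "2 ^ n"] by auto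
  define \<phi> where "\<phi> A = restrict (\<lambda>i. if i < m then (if i \<in> A then 1 else 0)
      else if i < 2 * m then (if i - m \<in> A then 0 else 1) else (0::nat)) {0..<s}" for A
  have m2: "2 * m \<le> s" unfolding m_def by simp
  have inj: "inj_on \<phi> C"
  proof
    fix A B assume AB: "A \<in> C" "B \<in> C" "\<phi> A = \<phi> B"
    show "A = B"
    proof (rule set_eqI)
      fix x
      show "x \<in> A \<longleftrightarrow> x \<in> B"
      proof (cases "x < m")
        case True
        have "\<phi> A x = \<phi> B x" using AB by simp
        then show ?thesis using True m2 by (auto simp: \<phi>_def split: if_splits)
      next
        case False
        have "A \<subseteq> {0..<m}" "B \<subseteq> {0..<m}" using AB C(1) by auto
        then show ?thesis using False by auto
      qed
    qed
  qed
  have sumeq: "(\<Sum>i<s. \<phi> A i * (1 - \<phi> B i)) = card ((A - B) \<union> (B - A))"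
    if "A \<subseteq> {0..<m}" "B \<subseteq> {0..<m}" for A B
  proof -
    have split: "{..<s} = {..<m} \<union> {m..<2*m} \<union> {2*m..<s}" using m2 by auto
    have "(\<Sum>i<s. \<phi> A i * (1 - \<phi> B i)) =
       (\<Sum>i<m. \<phi> A i * (1 - \<phi> B i)) + (\<Sum>i\<in>{m..<2*m}. \<phi> A i * (1 - \<phi> B i))
        + (\<Sum>i\<in>{2*m..<s}. \<phi> A i * (1 - \<phi> B i))"
      unfolding split by (subst sum.union_disjoint; auto)+
    also have "(\<Sum>i\<in>{2*m..<s}. \<phi> A i * (1 - \<phi> B i)) = 0"
      by (rule sum.neutral) (auto simp: \<phi>_def)
    also have "(\<Sum>i<m. \<phi> A i * (1 - \<phi> B i)) = (\<Sum>i<m. if i \<in> A - B then 1 else 0)"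
      by (rule sum.cong) (use m2 in \<open>auto simp: \<phi>_def\<close>)
    also have "\<dots> = card ({..<m} \<inter> (A - B))" by (simp add: sum.If_cases set_diff_eq)
    also have "{..<m} \<inter> (A - B) = A - B" using that by auto
    also have "(\<Sum>i\<in>{m..<2*m}. \<phi> A i * (1 - \<phi> B i)) = (\<Sum>i\<in>{m..<2*m}. if i - m \<in> B - A then 1 else 0)"
      by (rule sum.cong) (use m2 in \<open>auto simp: \<phi>_def\<close>)
    also have "\<dots> = (\<Sum>j<m. if j \<in> B - A then 1 else 0)"
    proof -
      have "(\<Sum>j<m. (if j \<in> B - A then 1 else 0::nat)) = (\<Sum>i\<in>(\<lambda>j. j + m) ` {..<m}. if i - m \<in> B - A then 1 else 0)"
        by (subst sum.reindex) (auto simp: inj_on_def)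
      also have "(\<lambda>j. j + m) ` {..<m} = {m..<2*m}"
      proof (intro equalityI subsetI)
        fix x assume "x \<in> {m..<2*m}"
        then show "x \<in> (\<lambda>j. j + m) ` {..<m}" by (intro image_eqI[of _ _ "x - m"]) auto
      qed auto
      finally show ?thesis by simp
    qed
    also have "\<dots> = card ({..<m} \<inter> (B - A))" by (simp add: sum.If_cases set_diff_eq)
    also have "{..<m} \<inter> (B - A) = B - A" using that by auto
    moreover have "card ((A - B) \<union> (B - A)) = card (A - B) + card (B - A)"
    proof (rule card_Un_disjoint)
      show "finite (A - B)" "finite (B - A)"
        using that by (auto intro: finite_subset[OF _ finite_atLeastLessThan])
    qed auto
    ultimately show ?thesis by simp
  qed
  show ?thesis
  proof (intro exI[of _ "\<phi> ` C"] conjI ballI impI)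
    show "\<phi> ` C \<subseteq> {0..<s} \<rightarrow>\<^sub>E {0, 1}"
    proof (rule image_subsetI)
      fix A assume "A \<in> C"
      have "\<And>i. (if i < m then (if i \<in> A then 1 else 0)
      else if i < 2 * m then (if i - m \<in> A then 0 else 1) else (0::nat)) \<in> {0, 1}" by simp
      then show "\<phi> A \<in> {0..<s} \<rightarrow>\<^sub>E {0, 1}" unfolding \<phi>_def by (simp only: restrict_PiE_iff) blast
    qed
    show "card (\<phi> ` C) = 2 ^ n" using card_image[OF inj] C(2) by simp
    fix a b assume ab: "a \<in> \<phi> ` C" "b \<in> \<phi> ` C" "a \<noteq> b"
    then obtain A B where AB: "A \<in> C" "B \<in> C" "a = \<phi> A" "b = \<phi> B" by auto
    then have "A \<noteq> B" using ab by auto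
    have sub: "A \<subseteq> {0..<m}" "B \<subseteq> {0..<m}" using C(1) AB by auto
    have "d \<le> card ((A - B) \<union> (B - A))" using C(3) AB \<open>A \<noteq> B\<close> by blast
    then have h1: "d \<le> (\<Sum>i<s. a i * (1 - b i))" using sumeq[OF sub] AB by simp
    have "s \<le> 8 * d" unfolding d_def by auto
    then have "real s \<le> real (8 * d)" by (simp only: of_nat_le_iff)
    then have h2: "real s / 8 \<le> real d" by simp
    from h1 have "real d \<le> real (\<Sum>i<s. a i * (1 - b i))" by (simp only: of_nat_le_iff)
    with h2 show "real s / 8 \<le> real (\<Sum>i<s. a i * (1 - b i))" by linarith
  qed
qed

end
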